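(* Let $\phi:\mathbb{R}^{d}\to\mathbb{R}^{d}$ be a $C^{2}$ diffeomorphism, $x_{1}\in\mathbb{R}^{d}$ and $x_{j}=\phi^{j-1}(x_{1})$. If $x_{1},\ldots,x_{D-1}$ are distinct, then the $(D-1)\times D_{\alpha}$ matrix $V(x_{1})$ (defined in the context) has rank $D-1$, i.e. rank equal to its number of rows.
   Context: $\pi_{1}$ is the first coordinate projection, $\mathbf{e}_{1}=(1,0,\ldots,0)$. For a multi-index $\alpha\in\mathbb{Z}_{\geq0}^{d}$, $p_{\alpha}(x)=\prod_i(\pi_{i}x)^{\alpha_{i}}$; $\mathcal{I}_{2D-1}$ is the set of multi-indices with $|\alpha|=\sum_i\alpha_i\leq2D-1$, of cardinality $D_{\alpha}$. For $c=(c_{\alpha})\in\mathbb{R}^{D_{\alpha}}$ let $\phi_{c}(x)=\phi(x)+\mathbf{e}_{1}\sum_{\alpha\in\mathcal{I}_{2D-1}}c_{\alpha}p_{\alpha}(x)$. The matrix $V(x_{1})$ has rows $j=1,\ldots,D-1$ equal to the gradient with respect to $c$ at $c=0$ of $c\mapsto\pi_{1}\phi_{c}^{j}(x_{1})$; equivalently, with $F_{c}(x_{1})=(\pi_{1}x_{1},\pi_{1}\phi_{c}(x_{1}),\ldots,\pi_{1}\phi_{c}^{D-1}(x_{1}))$, one has $F_{c}(x_{1})=F_{0}(x_{1})+\binom{0}{V(x_{1})}c+O(\|c\|^{2})$. *)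

theory Defs
  imports "HOL-Analysis.Analysis"
begin

text \<open>First coordinate projection and first standard basis vector of R^d;
  the index type carries a well-order, its least element is "coordinate 1".\<close>
definition idx1 :: "'d::{finite,wellorder}" where "idx1 = (LEAST i. True)"

definition pi1 :: "(real,'d::{finite,wellorder}) vec \<Rightarrow> real" where "pi1 x = x $ idx1"

definition e1 :: "(real,'d::{finite,wellorder}) vec" where "e1 = axis idx1 1"

definition pmon :: "('d::finite \<Rightarrow> nat) \<Rightarrow> (real,'d) vec \<Rightarrow> real" where
  "pmon \<alpha> x = (\<Prod>i\<in>UNIV. (x $ i) ^ (\<alpha> i))"

definition multi_idx :: "nat \<Rightarrow> ('d::finite \<Rightarrow> nat) set" where
  "multi_idx n = {\<alpha>. (\<Sum>i\<in>UNIV. \<alpha> i) \<le> n}"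

definition phi_c :: "nat \<Rightarrow> ((real,'d::{finite,wellorder}) vec \<Rightarrow> (real,'d) vec) \<Rightarrow> (('d::{finite,wellorder} \<Rightarrow> nat) \<Rightarrow> real)
    \<Rightarrow> (real,'d::{finite,wellorder}) vec \<Rightarrow> (real,'d::{finite,wellorder}) vec" where
  "phi_c D \<phi> c x = \<phi> x + (\<Sum>\<alpha>\<in>multi_idx (2*D-1). c \<alpha> * pmon \<alpha> x) *\<^sub>R e1"

definition Vmat :: "nat \<Rightarrow> ((real,'d::{finite,wellorder}) vec \<Rightarrow> (real,'d) vec) \<Rightarrow> (real,'d::{finite,wellorder}) vec \<Rightarrow> nat
    \<Rightarrow> ('d::{finite,wellorder} \<Rightarrow> nat) \<Rightarrow> real" where
  "Vmat D \<phi> x1 j \<alpha> =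
     deriv (\<lambda>t. pi1 ((phi_c D \<phi> (\<lambda>\<beta>. if \<beta> = \<alpha> then t else 0) ^^ j) x1)) 0"

definition rows_indep :: "('r \<Rightarrow> 'c \<Rightarrow> real) \<Rightarrow> 'r set \<Rightarrow> 'c set \<Rightarrow> bool" where
  "rows_indep M S C \<longleftrightarrow>
     (\<forall>a. (\<forall>k\<in>C. (\<Sum>j\<in>S. a j * M j k) = 0) \<longrightarrow> (\<forall>j\<in>S. a j = 0))"

definition mat_rank :: "('r \<Rightarrow> 'c \<Rightarrow> real) \<Rightarrow> 'r set \<Rightarrow> 'c set \<Rightarrow> nat" where
  "mat_rank M R C = Max {card S | S. S \<subseteq> R \<and> rows_indep M S C}"

definition C2 :: "((real,'d::finite) vec \<Rightarrow> (real,'d) vec) \<Rightarrow> bool" where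
  "C2 f \<longleftrightarrow> (\<exists>Df D2f. (\<forall>x. (f has_derivative blinfun_apply (Df x)) (at x)) \<and>
                      (\<forall>x. (Df has_derivative blinfun_apply (D2f x)) (at x)) \<and>
                      continuous_on UNIV D2f)"

definition C2_diffeo :: "((real,'d::finite) vec \<Rightarrow> (real,'d) vec) \<Rightarrow> bool" where
  "C2_diffeo f \<longleftrightarrow> bij f \<and> C2 f \<and> C2 (inv f)"

end

theory Submission
  imports Defs
begin


fun Wv :: "(nat \<Rightarrow> 'a::real_normed_vector \<Rightarrow>\<^sub>L 'a) \<Rightarrow> 'a \<Rightarrow> nat \<Rightarrow> nat \<Rightarrow> 'a" where
  "Wv A e 0 i = 0"
| "Wv A e (Suc j) i = (if i = j then e else blinfun_apply (A j) (Wv A e j i))"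

lemma iter_deriv:
  fixes \<phi> :: "'a::real_normed_vector \<Rightarrow> 'a" and g :: "'a \<Rightarrow> real"
  assumes dphi: "\<And>x. (\<phi> has_derivative blinfun_apply (Df x)) (at x)"
    and cg: "continuous_on UNIV g"
  shows "((\<lambda>t. ((\<lambda>x. \<phi> x + (t * g x) *\<^sub>R e) ^^ j) x0) has_derivative
     (\<lambda>h. h *\<^sub>R (\<Sum>i<j. g ((\<phi>^^i) x0) *\<^sub>R Wv (\<lambda>k. Df ((\<phi>^^k) x0)) e j i))) (at 0)"
proof (induction j)
  case 0
  then show ?case by simp
next
  case (Suc j)
  define A where "A = (\<lambda>k. Df ((\<phi>^^k) x0))"
  define y where "y = (\<lambda>t. ((\<lambda>x. \<phi> x + (t * g x) *\<^sub>R e) ^^ j) x0)"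
  define v where "v = (\<Sum>i<j. g ((\<phi>^^i) x0) *\<^sub>R Wv A e j i)"
  have y0: "y 0 = (\<phi>^^j) x0" unfolding y_def by simp
  have dy: "(y has_derivative (\<lambda>h. h *\<^sub>R v)) (at 0)" using Suc.IH unfolding y_def v_def A_def .
  have d1: "((\<lambda>t. \<phi> (y t)) has_derivative (\<lambda>h. blinfun_apply (A j) (h *\<^sub>R v))) (at 0)"
    using diff_chain_at[OF dy, of \<phi> "blinfun_apply (A j)"] dphi[of "y 0"] y0
    unfolding A_def by (simp add: o_def)
  have cy: "isCont y 0" using has_derivative_continuous[OF dy] .
  have cgy: "isCont (\<lambda>t. g (y t)) 0"
    by (rule isCont_o2[OF cy]) (use cg in \<open>simp add: continuous_on_eq_continuous_at\<close>)
  have d2: "DERIV (\<lambda>t. t * g (y t)) 0 :> g (y 0)"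
    unfolding CARAT_DERIV using cgy by (intro exI[of _ "\<lambda>t. g (y t)"]) auto
  have d2': "((\<lambda>t. (t * g (y t)) *\<^sub>R e) has_derivative (\<lambda>h. (g (y 0) * h) *\<^sub>R e)) (at 0)"
    using bounded_linear.has_derivative[OF bounded_linear_scaleR_left d2[unfolded has_field_derivative_def]] .
  have d3: "((\<lambda>t. \<phi> (y t) + (t * g (y t)) *\<^sub>R e) has_derivative
      (\<lambda>h. blinfun_apply (A j) (h *\<^sub>R v) + (g (y 0) * h) *\<^sub>R e)) (at 0)"
    using has_derivative_add[OF d1 d2'] .
  have eq: "blinfun_apply (A j) (h *\<^sub>R v) + (g (y 0) * h) *\<^sub>R e
     = h *\<^sub>R (\<Sum>i<Suc j. g ((\<phi>^^i) x0) *\<^sub>R Wv A e (Suc j) i)" for h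
  proof -
    have "(\<Sum>i<Suc j. g ((\<phi>^^i) x0) *\<^sub>R Wv A e (Suc j) i)
        = (\<Sum>i<j. g ((\<phi>^^i) x0) *\<^sub>R blinfun_apply (A j) (Wv A e j i)) + g ((\<phi>^^j) x0) *\<^sub>R e"
      by (auto simp add: sum.lessThan_Suc intro!: sum.cong)
    also have "\<dots> = blinfun_apply (A j) v + g (y 0) *\<^sub>R e"
      unfolding v_def y0 by (simp add: blinfun.sum_right blinfun.scaleR_right)
    finally show ?thesis by (simp add: blinfun.scaleR_right scaleR_add_right)
  qed
  have eqf: "(\<lambda>h. blinfun_apply (A j) (h *\<^sub>R v) + (g (y 0) * h) *\<^sub>R e)
     = (\<lambda>h. h *\<^sub>R (\<Sum>i<Suc j. g ((\<phi>^^i) x0) *\<^sub>R Wv A e (Suc j) i))"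
    using eq by (rule ext)
  show ?case using d3 unfolding eqf unfolding y_def A_def by simp
qed


lemma finite_multi_idx: "finite (multi_idx n :: ('d::finite \<Rightarrow> nat) set)"
proof (rule finite_subset)
  show "multi_idx n \<subseteq> Pi\<^sub>E (UNIV::'d set) (\<lambda>_. {..n})"
  proof
    fix \<alpha> :: "'d \<Rightarrow> nat" assume a: "\<alpha> \<in> multi_idx n"
    have "\<alpha> i \<le> n" for i
      using member_le_sum[of i UNIV \<alpha>] a by (auto simp: multi_idx_def)
    then show "\<alpha> \<in> Pi\<^sub>E UNIV (\<lambda>_. {..n})" by (simp add: PiE_iff)
  qed
  show "finite (Pi\<^sub>E (UNIV::'d set) (\<lambda>_. {..n}))" by (rule finite_PiE) auto
qed

lemma pmon_cont: "continuous_on UNIV (pmon \<alpha>)"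
  unfolding pmon_def by (intro continuous_intros)

definition Hz :: "(nat \<Rightarrow> (real,'d::finite) vec) \<Rightarrow> nat \<Rightarrow> (nat \<Rightarrow> real) \<Rightarrow> nat \<Rightarrow> bool" where
  "Hz P N u m \<longleftrightarrow> (\<forall>\<alpha>\<in>multi_idx m. (\<Sum>i<N. u i * pmon \<alpha> (P i)) = 0)"

lemma pmon_upd: "pmon (\<alpha>(c := Suc (\<alpha> c))) x = x $ c * pmon \<alpha> x"
proof -
  have h1: "pmon (\<alpha>(c := Suc (\<alpha> c))) x = (x $ c) ^ Suc (\<alpha> c) * (\<Prod>i\<in>UNIV - {c}. (x $ i) ^ ((\<alpha>(c := Suc (\<alpha> c))) i))"
    unfolding pmon_def by (subst prod.remove[of _ c]) auto
  have h2: "(\<Prod>i\<in>UNIV - {c}. (x $ i) ^ ((\<alpha>(c := Suc (\<alpha> c))) i)) = (\<Prod>i\<in>UNIV - {c}. (x $ i) ^ (\<alpha> i))"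
    by (rule prod.cong) auto
  have h3: "pmon \<alpha> x = (x $ c) ^ (\<alpha> c) * (\<Prod>i\<in>UNIV - {c}. (x $ i) ^ (\<alpha> i))"
    unfolding pmon_def by (subst prod.remove[of _ c]) auto
  show ?thesis unfolding h1 h2 h3 by simp
qed

lemma multi_idx_upd: assumes "\<alpha> \<in> multi_idx m" shows "\<alpha>(c := Suc (\<alpha> c)) \<in> multi_idx (Suc m)"
proof -
  have "(\<Sum>i\<in>UNIV. (\<alpha>(c := Suc (\<alpha> c))) i) = Suc (\<alpha> c) + (\<Sum>i\<in>UNIV - {c}. (\<alpha>(c := Suc (\<alpha> c))) i)"
    by (subst sum.remove[of _ c]) auto
  also have "(\<Sum>i\<in>UNIV - {c}. (\<alpha>(c := Suc (\<alpha> c))) i) = (\<Sum>i\<in>UNIV - {c}. \<alpha> i)"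
    by (rule sum.cong) auto
  also have "(\<Sum>i\<in>UNIV. \<alpha> i) = \<alpha> c + (\<Sum>i\<in>UNIV - {c}. \<alpha> i)"
    by (subst sum.remove[of _ c]) auto
  ultimately show ?thesis using assms by (simp add: multi_idx_def)
qed

lemma H_mono: "m \<le> m' \<Longrightarrow> Hz P N u m' \<Longrightarrow> Hz P N u m"
  unfolding Hz_def multi_idx_def by auto

lemma H_step:
  fixes P :: "nat \<Rightarrow> (real,'d::finite) vec" and c :: 'd
  assumes "Hz P N u (Suc m)"
  shows "Hz P N (\<lambda>i. u i * (P i $ c - r)) m"
  unfolding Hz_def
proof
  fix \<alpha> :: "'d \<Rightarrow> nat" assume a: "\<alpha> \<in> multi_idx m"
  have z1: "(\<Sum>i<N. u i * pmon (\<alpha>(c := Suc (\<alpha> c))) (P i)) = 0"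
    using assms multi_idx_upd[OF a, of c] unfolding Hz_def by blast
  have z2: "(\<Sum>i<N. u i * pmon \<alpha> (P i)) = 0"
    using H_mono[OF _ assms, of m] a unfolding Hz_def by auto
  have "(\<Sum>i<N. u i * (P i $ c - r) * pmon \<alpha> (P i))
      = (\<Sum>i<N. u i * pmon (\<alpha>(c := Suc (\<alpha> c))) (P i)) - r * (\<Sum>i<N. u i * pmon \<alpha> (P i))"
    by (simp add: pmon_upd sum_distrib_left sum_subtractf[symmetric] algebra_simps)
  then show "(\<Sum>i<N. u i * (P i $ c - r) * pmon \<alpha> (P i)) = 0" using z1 z2 by simp
qed

lemma H_prod:
  assumes "finite F"
  shows "Hz P N u (m + card F) \<Longrightarrow> Hz P N (\<lambda>i. u i * (\<Prod>j\<in>F. (P i $ c j - P j $ c j))) m"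
  using assms
proof (induction F arbitrary: m rule: finite_induct)
  case empty
  then show ?case by simp
next
  case (insert x F)
  have "Hz P N u (Suc m + card F)" using insert by simp
  then have "Hz P N (\<lambda>i. u i * (\<Prod>j\<in>F. (P i $ c j - P j $ c j))) (Suc m)" using insert.IH by blast
  then have "Hz P N (\<lambda>i. u i * (\<Prod>j\<in>F. (P i $ c j - P j $ c j)) * (P i $ c x - P x $ c x)) m"
    by (rule H_step)
  moreover have "(\<lambda>i. u i * (\<Prod>j\<in>F. (P i $ c j - P j $ c j)) * (P i $ c x - P x $ c x))
     = (\<lambda>i. u i * (\<Prod>j\<in>insert x F. (P i $ c j - P j $ c j)))"
    using insert by (auto simp: algebra_simps)
  ultimately show ?case by simp
qed

lemma interp:
  assumes inj: "inj_on P {..<N}" and H: "Hz P N u M" and NM: "N - 1 \<le> M" and k: "k < N"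
  shows "u k = 0"
proof -
  define c where "c = (\<lambda>j. SOME c. P k $ c \<noteq> P j $ c)"
  define F where "F = {..<N} - {k}"
  have cF: "card F = N - 1" using k unfolding F_def by simp
  have c: "P k $ c j \<noteq> P j $ c j" if "j \<in> F" for j
  proof -
    have "P k \<noteq> P j" using inj that k unfolding F_def inj_on_def by auto
    then have "\<exists>c. P k $ c \<noteq> P j $ c" by (simp add: vec_eq_iff)
    then show ?thesis unfolding c_def by (rule someI_ex)
  qed
  have "Hz P N u (0 + card F)" using H_mono[OF _ H] NM cF by simp
  then have H0: "Hz P N (\<lambda>i. u i * (\<Prod>j\<in>F. (P i $ c j - P j $ c j))) 0"
    by (rule H_prod[rotated]) (simp add: F_def)
  have z: "(\<lambda>_. 0) \<in> (multi_idx 0 :: ('a \<Rightarrow> nat) set)" by (simp add: multi_idx_def)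
  have p1: "pmon (\<lambda>_. 0) x = 1" for x :: "(real,'a) vec" by (simp add: pmon_def)
  have "(\<Sum>i<N. u i * (\<Prod>j\<in>F. (P i $ c j - P j $ c j))) = 0"
    using H0 z unfolding Hz_def by (metis (no_types, lifting) mult.right_neutral p1 sum.cong)
  also have "(\<Sum>i<N. u i * (\<Prod>j\<in>F. (P i $ c j - P j $ c j))) = u k * (\<Prod>j\<in>F. (P k $ c j - P j $ c j))"
  proof -
    have "(\<Sum>i<N. u i * (\<Prod>j\<in>F. (P i $ c j - P j $ c j))) =
        u k * (\<Prod>j\<in>F. (P k $ c j - P j $ c j)) + (\<Sum>i\<in>{..<N} - {k}. u i * (\<Prod>j\<in>F. (P i $ c j - P j $ c j)))"
      using k by (subst sum.remove[of _ k]) auto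
    moreover have "(\<Sum>i\<in>{..<N} - {k}. u i * (\<Prod>j\<in>F. (P i $ c j - P j $ c j))) = 0"
    proof (rule sum.neutral, rule ballI)
      fix i assume i: "i \<in> {..<N} - {k}"
      then have "i \<in> F" by (simp add: F_def)
      then have "(\<Prod>j\<in>F. (P i $ c j - P j $ c j)) = 0"
        by (intro prod_zero) (auto simp: F_def intro!: bexI[of _ i])
      then show "u i * (\<Prod>j\<in>F. (P i $ c j - P j $ c j)) = 0" by simp
    qed
    ultimately show ?thesis by simp
  qed
  finally have "u k * (\<Prod>j\<in>F. (P k $ c j - P j $ c j)) = 0" .
  moreover have "(\<Prod>j\<in>F. (P k $ c j - P j $ c j)) \<noteq> 0"
    using c by (simp add: F_def prod_zero_iff)
  ultimately show ?thesis by simp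
qed

lemma Vmat_formula:
  fixes \<phi> :: "(real,'d::{finite,wellorder}) vec \<Rightarrow> (real,'d) vec"
  assumes dphi: "\<And>x. (\<phi> has_derivative blinfun_apply (Df x)) (at x)"
    and a: "\<alpha> \<in> multi_idx (2*D-1)"
  shows "Vmat D \<phi> x1 j \<alpha> = (\<Sum>i<j. pmon \<alpha> ((\<phi>^^i) x1) * pi1 (Wv (\<lambda>k. Df ((\<phi>^^k) x1)) e1 j i))"
proof -
  have pc: "phi_c D \<phi> (\<lambda>\<beta>. if \<beta> = \<alpha> then t else 0) = (\<lambda>x. \<phi> x + (t * pmon \<alpha> x) *\<^sub>R e1)" for t
  proof
    fix x
    have "(\<Sum>\<beta>\<in>multi_idx (2*D-1). (if \<beta> = \<alpha> then t else 0) * pmon \<beta> x)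
        = (\<Sum>\<beta>\<in>multi_idx (2*D-1). (if \<beta> = \<alpha> then t * pmon \<beta> x else 0))"
      by (rule sum.cong) auto
    also have "\<dots> = t * pmon \<alpha> x" by (subst sum.delta[OF finite_multi_idx]) (simp only: a if_True)
    finally show "phi_c D \<phi> (\<lambda>\<beta>. if \<beta> = \<alpha> then t else 0) x = \<phi> x + (t * pmon \<alpha> x) *\<^sub>R e1"
      unfolding phi_c_def by simp
  qed
  define v where "v = (\<Sum>i<j. pmon \<alpha> ((\<phi>^^i) x1) *\<^sub>R Wv (\<lambda>k. Df ((\<phi>^^k) x1)) e1 j i)"
  have d: "((\<lambda>t. ((\<lambda>x. \<phi> x + (t * pmon \<alpha> x) *\<^sub>R e1) ^^ j) x1) has_derivative (\<lambda>h. h *\<^sub>R v)) (at 0)"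
    unfolding v_def by (rule iter_deriv[OF dphi pmon_cont])
  have d2: "((\<lambda>t. pi1 (((\<lambda>x. \<phi> x + (t * pmon \<alpha> x) *\<^sub>R e1) ^^ j) x1)) has_derivative (\<lambda>h. pi1 (h *\<^sub>R v))) (at 0)"
    unfolding pi1_def by (rule bounded_linear.has_derivative[OF bounded_linear_vec_nth d])
  have "(\<lambda>h. pi1 (h *\<^sub>R v)) = (*) (pi1 v)" by (auto simp: pi1_def)
  then have "DERIV (\<lambda>t. pi1 (((\<lambda>x. \<phi> x + (t * pmon \<alpha> x) *\<^sub>R e1) ^^ j) x1)) 0 :> pi1 v"
    using d2 unfolding has_field_derivative_def by simp
  then have "Vmat D \<phi> x1 j \<alpha> = pi1 v"
    unfolding Vmat_def pc by (rule DERIV_imp_deriv)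
  also have "pi1 v = (\<Sum>i<j. pmon \<alpha> ((\<phi>^^i) x1) * pi1 (Wv (\<lambda>k. Df ((\<phi>^^k) x1)) e1 j i))"
    unfolding v_def pi1_def by simp
  finally show ?thesis .
qed

lemma pi1_e1: "pi1 (e1 :: (real,'d::{finite,wellorder}) vec) = 1"
  by (simp add: pi1_def e1_def axis_def)

theorem lemma10:
  fixes \<phi> :: "(real,'d::{finite,wellorder}) vec \<Rightarrow> (real,'d) vec" and x1 :: "(real,'d) vec" and D :: nat
  assumes "C2_diffeo \<phi>"
    and "inj_on (\<lambda>j. (\<phi> ^^ (j - 1)) x1) {1..D-1}"
  shows "mat_rank (Vmat D \<phi> x1) {1..D-1} (multi_idx (2*D-1)) = D - 1"
proof -
  define N where "N = D - 1"
  define I where "I = (multi_idx (2*D-1) :: ('d \<Rightarrow> nat) set)"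
  define pts where "pts = (\<lambda>i. (\<phi>^^i) x1)"
  obtain Df D2f where dphi: "\<And>x. (\<phi> has_derivative blinfun_apply (Df x)) (at x)"
    using assms(1) unfolding C2_diffeo_def C2_def by blast
  define l where "l = (\<lambda>j i. pi1 (Wv (\<lambda>k. Df (pts k)) e1 j i))"
  have V: "Vmat D \<phi> x1 j \<alpha> = (\<Sum>i<j. pmon \<alpha> (pts i) * l j i)" if "\<alpha> \<in> I" for j \<alpha>
    using Vmat_formula[OF dphi, of \<alpha> D x1 j] that unfolding I_def pts_def l_def by simp
  have ldiag: "l (Suc i) i = 1" for i unfolding l_def by (simp add: pi1_e1)
  have injP: "inj_on pts {..<N}"
  proof (rule inj_onI)
    fix i i' assume "i \<in> {..<N}" "i' \<in> {..<N}" "pts i = pts i'"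
    then have "Suc i \<in> {1..D-1}" "Suc i' \<in> {1..D-1}"
      "(\<lambda>j. (\<phi> ^^ (j - 1)) x1) (Suc i) = (\<lambda>j. (\<phi> ^^ (j - 1)) x1) (Suc i')"
      by (auto simp: N_def pts_def)
    then have "Suc i = Suc i'" using assms(2) unfolding inj_on_def by blast
    then show "i = i'" by simp
  qed
  have indep: "rows_indep (Vmat D \<phi> x1) {1..N} I"
    unfolding rows_indep_def
  proof (intro allI impI)
    fix a :: "nat \<Rightarrow> real"
    assume A: "\<forall>k\<in>I. (\<Sum>j\<in>{1..N}. a j * Vmat D \<phi> x1 j k) = 0"
    define u where "u = (\<lambda>i. \<Sum>j\<in>{1..N}. a j * (if i < j then l j i else 0))"
    have Hu: "Hz pts N u (2*D-1)"
      unfolding Hz_def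
    proof
      fix \<alpha> :: "'d \<Rightarrow> nat" assume a\<alpha>: "\<alpha> \<in> multi_idx (2*D-1)"
      then have aI: "\<alpha> \<in> I" by (simp add: I_def)
      have "(\<Sum>j\<in>{1..N}. a j * Vmat D \<phi> x1 j \<alpha>)
          = (\<Sum>j\<in>{1..N}. \<Sum>i<N. a j * (if i < j then l j i else 0) * pmon \<alpha> (pts i))"
      proof (rule sum.cong[OF refl])
        fix j assume j: "j \<in> {1..N}"
        have "(\<Sum>i<N. a j * (if i < j then l j i else 0) * pmon \<alpha> (pts i))
            = (\<Sum>i<N. if i < j then a j * (pmon \<alpha> (pts i) * l j i) else 0)"
          by (rule sum.cong) auto
        also have "\<dots> = (\<Sum>i\<in>{i\<in>{..<N}. i < j}. a j * (pmon \<alpha> (pts i) * l j i))"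
          by (rule sum.inter_filter[symmetric]) simp
        also have "{i\<in>{..<N}. i < j} = {..<j}" using j by auto
        finally show "a j * Vmat D \<phi> x1 j \<alpha> = (\<Sum>i<N. a j * (if i < j then l j i else 0) * pmon \<alpha> (pts i))"
          using V[OF aI] by (simp add: sum_distrib_left)
      qed
      also have "\<dots> = (\<Sum>i<N. u i * pmon \<alpha> (pts i))"
        unfolding u_def by (subst sum.swap) (simp add: sum_distrib_right)
      finally show "(\<Sum>i<N. u i * pmon \<alpha> (pts i)) = 0" using A aI by simp
    qed
    have u0: "u k = 0" if "k < N" for k
      by (rule interp[OF injP Hu _ that]) (simp add: N_def)
    have "\<forall>j. j \<in> {1..N} \<longrightarrow> N - j = n \<longrightarrow> a j = 0" for n
    proof (induction n rule: less_induct)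
      case (less n)
      show ?case
      proof (intro allI impI)
        fix j assume j: "j \<in> {1..N}" and n: "N - j = n"
        have big: "a j' = 0" if "j' \<in> {1..N}" "j < j'" for j'
          using less.IH[of "N - j'"] that j n by auto
        have "u (j - 1) = a j * (if j - 1 < j then l j (j - 1) else 0)
             + (\<Sum>j'\<in>{1..N} - {j}. a j' * (if j - 1 < j' then l j' (j - 1) else 0))"
          unfolding u_def using j by (subst sum.remove[of _ j]) auto
        also have "(\<Sum>j'\<in>{1..N} - {j}. a j' * (if j - 1 < j' then l j' (j - 1) else 0)) = 0"
        proof (rule sum.neutral, rule ballI)
          fix j' assume j': "j' \<in> {1..N} - {j}"
          show "a j' * (if j - 1 < j' then l j' (j - 1) else 0) = 0"
          proof (cases "j < j'")
            case True then show ?thesis using big j' by auto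
          next
            case False then show ?thesis using j j' by auto
          qed
        qed
        also have "l j (j - 1) = 1" using j ldiag[of "j - 1"] by (simp add: Suc_pred)
        finally have "u (j - 1) = a j" using j by simp
        moreover have "u (j - 1) = 0" using u0[of "j - 1"] j by auto
        ultimately show "a j = 0" by simp
      qed
    qed
    then show "\<forall>j\<in>{1..N}. a j = 0" by blast
  qed
  define Sset where "Sset = {card S | S. S \<subseteq> {1..N} \<and> rows_indep (Vmat D \<phi> x1) S I}"
  have "Max Sset = N"
  proof (rule Max_eqI)
    show "finite Sset" unfolding Sset_def
      by (rule finite_subset[of _ "card ` Pow {1..N}"]) auto
    show "y \<le> N" if "y \<in> Sset" for y
      using that unfolding Sset_def using card_mono[of "{1..N}"] by fastforce
    show "N \<in> Sset" unfolding Sset_def using indep by force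
  qed
  then show ?thesis unfolding mat_rank_def Sset_def N_def I_def .
qed

end
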